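(* Let $t\geq 2$ be an integer and $f:\mathbb{N}\to\mathbb{N}$ with $\lim_{n\to\infty}f(n)=\infty$. Then there is a constant $C$ (depending only on $t$ and $f$) such that for every $n$ and every set $\mathcal{A}\subseteq\{0,1\}^n$ with $|\mathcal{A}|=f(n)$, there is a first-order sentence over $\tau_{\mathsf{string}}$ with at most $3\log_3(n)+\log_t(f(n))+C$ quantifiers that is true in $\mathbf{B}_w$ for all $w\in\mathcal{A}$ and false in $\mathbf{B}_{w'}$ for all $w'\in\{0,1\}^n\setminus\mathcal{A}$.
   Context: Vocabulary $\tau_{\mathsf{string}}=\langle <, S;\ \mathsf{min},\mathsf{max}\rangle$ with $<$ binary, $S$ unary, $\mathsf{min},\mathsf{max}$ constants. A string $w=w_1\cdots w_n\in\{0,1\}^n$ ($n\geq 1$) is encoded by the structure $\mathbf{B}_w$ with universe $\{1,\dots,n\}$, $<$ the usual order, $S=\{i: w_i=1\}$, $\mathsf{min}=1$, $\mathsf{max}=n$. The number of quantifiers is the number of quantifier occurrences. *)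

theory Defs
  imports Complex_Main
begin

datatype fterm = Var nat | Min | Max

datatype fform =
    FTrue | FFalse
  | Eq fterm fterm
  | Less fterm fterm
  | S fterm
  | Neg fform
  | Conj fform fform
  | Disj fform fform
  | Impl fform fform
  | Ex nat fform
  | All nat fform

fun tvars :: "fterm \<Rightarrow> nat set" where
  "tvars (Var x) = {x}"
| "tvars Min = {}"
| "tvars Max = {}"

fun free_vars :: "fform \<Rightarrow> nat set" where
  "free_vars FTrue = {}"
| "free_vars FFalse = {}"
| "free_vars (Eq a b) = tvars a \<union> tvars b"
| "free_vars (Less a b) = tvars a \<union> tvars b"
| "free_vars (S a) = tvars a"
| "free_vars (Neg p) = free_vars p"
| "free_vars (Conj p q) = free_vars p \<union> free_vars q"
| "free_vars (Disj p q) = free_vars p \<union> free_vars q"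
| "free_vars (Impl p q) = free_vars p \<union> free_vars q"
| "free_vars (Ex x p) = free_vars p - {x}"
| "free_vars (All x p) = free_vars p - {x}"

definition sentence :: "fform \<Rightarrow> bool" where
  "sentence p \<longleftrightarrow> free_vars p = {}"

fun qcount :: "fform \<Rightarrow> nat" where
  "qcount FTrue = 0"
| "qcount FFalse = 0"
| "qcount (Eq a b) = 0"
| "qcount (Less a b) = 0"
| "qcount (S a) = 0"
| "qcount (Neg p) = qcount p"
| "qcount (Conj p q) = qcount p + qcount q"
| "qcount (Disj p q) = qcount p + qcount q"
| "qcount (Impl p q) = qcount p + qcount q"
| "qcount (Ex x p) = Suc (qcount p)"
| "qcount (All x p) = Suc (qcount p)"

text \<open>The structure B_w for w = w_1...w_n (a bool list of length n, True = 1):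
  universe {1..n}, usual order, S = {i. w_i = 1}, min = 1, max = n.\<close>

fun teval :: "bool list \<Rightarrow> (nat \<Rightarrow> nat) \<Rightarrow> fterm \<Rightarrow> nat" where
  "teval w \<sigma> (Var x) = \<sigma> x"
| "teval w \<sigma> Min = 1"
| "teval w \<sigma> Max = length w"

fun sat :: "bool list \<Rightarrow> (nat \<Rightarrow> nat) \<Rightarrow> fform \<Rightarrow> bool" where
  "sat w \<sigma> FTrue = True"
| "sat w \<sigma> FFalse = False"
| "sat w \<sigma> (Eq a b) = (teval w \<sigma> a = teval w \<sigma> b)"
| "sat w \<sigma> (Less a b) = (teval w \<sigma> a < teval w \<sigma> b)"
| "sat w \<sigma> (S a) = (let i = teval w \<sigma> a in 1 \<le> i \<and> i \<le> length w \<and> w ! (i - 1))"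
| "sat w \<sigma> (Neg p) = (\<not> sat w \<sigma> p)"
| "sat w \<sigma> (Conj p q) = (sat w \<sigma> p \<and> sat w \<sigma> q)"
| "sat w \<sigma> (Disj p q) = (sat w \<sigma> p \<or> sat w \<sigma> q)"
| "sat w \<sigma> (Impl p q) = (sat w \<sigma> p \<longrightarrow> sat w \<sigma> q)"
| "sat w \<sigma> (Ex x p) = (\<exists>i\<in>{1..length w}. sat w (\<sigma>(x := i)) p)"
| "sat w \<sigma> (All x p) = (\<forall>i\<in>{1..length w}. sat w (\<sigma>(x := i)) p)"

text \<open>Truth of a sentence in B_w (evaluated under a dummy assignment into the universe;
  irrelevant for sentences).\<close>
definition holds :: "bool list \<Rightarrow> fform \<Rightarrow> bool" where
  "holds w p \<longleftrightarrow> sat w (\<lambda>_. 1) p"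

end

theory Submission
  imports Defs
begin


lemma teval_cong: "(\<forall>x\<in>tvars t. \<sigma> x = \<sigma>' x) \<Longrightarrow> teval w \<sigma> t = teval w \<sigma>' t"
  by (cases t) auto

lemma sat_cong: "(\<forall>x\<in>free_vars p. \<sigma> x = \<sigma>' x) \<Longrightarrow> sat w \<sigma> p = sat w \<sigma>' p"
proof (induction p arbitrary: \<sigma> \<sigma>')
  case (Eq a b) then show ?case using teval_cong[of a \<sigma> \<sigma>' w] teval_cong[of b \<sigma> \<sigma>' w] by auto
next
  case (Less a b) then show ?case using teval_cong[of a \<sigma> \<sigma>' w] teval_cong[of b \<sigma> \<sigma>' w] by auto
next
  case (S a) then show ?case using teval_cong[of a \<sigma> \<sigma>' w] by (auto simp: Let_def)
next
  case (Ex x p)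
  have "\<And>i. sat w (\<sigma>(x:=i)) p = sat w (\<sigma>'(x:=i)) p" using Ex by (intro Ex.IH) auto
  then show ?case by simp
next
  case (All x p)
  have "\<And>i. sat w (\<sigma>(x:=i)) p = sat w (\<sigma>'(x:=i)) p" using All by (intro All.IH) auto
  then show ?case by simp
next
  case (Neg p) then show ?case by simp
next
  case (Conj p q)
  hence "sat w \<sigma> p = sat w \<sigma>' p" "sat w \<sigma> q = sat w \<sigma>' q" by auto
  then show ?case by simp
next
  case (Disj p q)
  hence "sat w \<sigma> p = sat w \<sigma>' p" "sat w \<sigma> q = sat w \<sigma>' q" by auto
  then show ?case by simp
next
  case (Impl p q)
  hence "sat w \<sigma> p = sat w \<sigma>' p" "sat w \<sigma> q = sat w \<sigma>' q" by auto
  then show ?case by simp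
qed auto

definition Iff :: "fform \<Rightarrow> fform \<Rightarrow> fform" where
  "Iff p q = Conj (Impl p q) (Impl q p)"

fun Disjs :: "fform list \<Rightarrow> fform" where
  "Disjs [] = FFalse" | "Disjs (p#ps) = Disj p (Disjs ps)"
fun Conjs :: "fform list \<Rightarrow> fform" where
  "Conjs [] = FTrue" | "Conjs (p#ps) = Conj p (Conjs ps)"
fun Exs :: "nat list \<Rightarrow> fform \<Rightarrow> fform" where
  "Exs [] p = p" | "Exs (v#vs) p = Ex v (Exs vs p)"

lemma sat_Iff[simp]: "sat w \<sigma> (Iff p q) = (sat w \<sigma> p = sat w \<sigma> q)"
  by (auto simp: Iff_def)
lemma fv_Iff[simp]: "free_vars (Iff p q) = free_vars p \<union> free_vars q"
  by (auto simp: Iff_def)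
lemma qc_Iff[simp]: "qcount (Iff p q) = 2 * (qcount p + qcount q)"
  by (auto simp: Iff_def)
lemma sat_Disjs[simp]: "sat w \<sigma> (Disjs ps) = (\<exists>p\<in>set ps. sat w \<sigma> p)"
  by (induction ps) auto
lemma sat_Conjs[simp]: "sat w \<sigma> (Conjs ps) = (\<forall>p\<in>set ps. sat w \<sigma> p)"
  by (induction ps) auto
lemma fv_Disjs[simp]: "free_vars (Disjs ps) = (\<Union>p\<in>set ps. free_vars p)"
  by (induction ps) auto
lemma fv_Conjs[simp]: "free_vars (Conjs ps) = (\<Union>p\<in>set ps. free_vars p)"
  by (induction ps) auto
lemma qc_Disjs[simp]: "qcount (Disjs ps) = sum_list (map qcount ps)"
  by (induction ps) auto
lemma qc_Conjs[simp]: "qcount (Conjs ps) = sum_list (map qcount ps)"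
  by (induction ps) auto
lemma qc_Exs[simp]: "qcount (Exs vs p) = length vs + qcount p"
  by (induction vs) auto
lemma fv_Exs: "free_vars (Exs vs p) = free_vars p - set vs"
  by (induction vs) auto

lemma sat_Exs: "sat w \<sigma> (Exs vs p) =
  (\<exists>\<tau>. (\<forall>v. v \<notin> set vs \<longrightarrow> \<tau> v = \<sigma> v) \<and> (\<forall>v\<in>set vs. \<tau> v \<in> {1..length w}) \<and> sat w \<tau> p)"
proof (induction vs arbitrary: \<sigma>)
  case Nil
  then show ?case by (auto intro!: exI[of _ \<sigma>] simp: sat_cong) (metis ext)
next
  case (Cons v vs)
  show ?case
  proof
    assume "sat w \<sigma> (Exs (v # vs) p)"
    then obtain i where i: "i \<in> {1..length w}" "sat w (\<sigma>(v:=i)) (Exs vs p)" by auto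
    then obtain \<tau> where "(\<forall>u. u \<notin> set vs \<longrightarrow> \<tau> u = (\<sigma>(v:=i)) u)" "(\<forall>u\<in>set vs. \<tau> u \<in> {1..length w})" "sat w \<tau> p"
      using Cons by blast
    then show "\<exists>\<tau>. (\<forall>u. u \<notin> set (v#vs) \<longrightarrow> \<tau> u = \<sigma> u) \<and> (\<forall>u\<in>set (v#vs). \<tau> u \<in> {1..length w}) \<and> sat w \<tau> p"
    proof (intro exI[of _ \<tau>] conjI)
      show "\<forall>u. u \<notin> set (v#vs) \<longrightarrow> \<tau> u = \<sigma> u" using \<open>(\<forall>u. u \<notin> set vs \<longrightarrow> \<tau> u = (\<sigma>(v:=i)) u)\<close> by auto
      show "\<forall>u\<in>set (v#vs). \<tau> u \<in> {1..length w}"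
        using \<open>(\<forall>u. u \<notin> set vs \<longrightarrow> \<tau> u = (\<sigma>(v:=i)) u)\<close> \<open>(\<forall>u\<in>set vs. \<tau> u \<in> {1..length w})\<close> i(1)
        by (metis fun_upd_same set_ConsD)
    qed (use \<open>sat w \<tau> p\<close> in simp)
  next
    assume "\<exists>\<tau>. (\<forall>u. u \<notin> set (v#vs) \<longrightarrow> \<tau> u = \<sigma> u) \<and> (\<forall>u\<in>set (v#vs). \<tau> u \<in> {1..length w}) \<and> sat w \<tau> p"
    then obtain \<tau> where t: "(\<forall>u. u \<notin> set (v#vs) \<longrightarrow> \<tau> u = \<sigma> u)" "(\<forall>u\<in>set (v#vs). \<tau> u \<in> {1..length w})" "sat w \<tau> p"
      by blast
    have "sat w (\<sigma>(v:=\<tau> v)) (Exs vs p)"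
      unfolding Cons using t by (intro exI[of _ \<tau>]) auto
    then show "sat w \<sigma> (Exs (v # vs) p)" using t(2) by auto
  qed
qed


datatype cas = Cas (gd: fform) (en: fterm) (clo: nat) (chi: nat)

definition aterm :: "nat \<Rightarrow> fterm" where "aterm d = (if d = 0 then Min else Var (6*d))"

definition loc :: "(nat \<Rightarrow> fform) \<Rightarrow> nat \<Rightarrow> cas \<Rightarrow> fform" where
"loc \<beta> d c = (let a = aterm d; e = en c; z1 = Var (6*d+2); z2 = Var (6*d+4); a' = Var (6*d+6);
     L = chi c - clo c in
   if L = 0 then Conj (Eq a e) (Iff (S a) (\<beta> (clo c)))
   else if L = 1 then Conjs [Less a e, Neg (Conj (Less a a') (Less a' e)), Iff (S a) (\<beta> (clo c)), Iff (S e) (\<beta> (chi c))]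
   else if L = 2 then Conjs [Less a z1, Less z1 e, Impl (Conj (Less a a') (Less a' e)) (Eq a' z1),
      Iff (S a) (\<beta> (clo c)), Iff (S z1) (\<beta> (clo c + 1)), Iff (S e) (\<beta> (chi c))]
   else Conjs [Less a z1, Less z1 z2, Less z2 e])"

definition internal :: "cas \<Rightarrow> bool" where "internal c = (3 \<le> chi c - clo c)"

definition spl1 :: "cas \<Rightarrow> nat" where "spl1 c = clo c + (chi c - clo c) div 3"
definition spl2 :: "cas \<Rightarrow> nat" where "spl2 c = spl1 c + (chi c - clo c + 1) div 3"

definition childs :: "nat \<Rightarrow> cas \<Rightarrow> cas list" where
"childs d c = [Cas (Conj (gd c) (Eq (Var (6*d+6)) (aterm d))) (Var (6*d+2)) (clo c) (spl1 c),
               Cas (Conj (gd c) (Eq (Var (6*d+6)) (Var (6*d+2)))) (Var (6*d+4)) (spl1 c) (spl2 c),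
               Cas (Conj (gd c) (Eq (Var (6*d+6)) (Var (6*d+4)))) (en c) (spl2 c) (chi c)]"

definition children :: "nat \<Rightarrow> cas list \<Rightarrow> cas list" where
"children d cs = concat (map (childs d) (filter internal cs))"

definition Local :: "(nat \<Rightarrow> fform) \<Rightarrow> nat \<Rightarrow> cas list \<Rightarrow> fform" where
"Local \<beta> d cs = Disjs (map (\<lambda>c. Conj (gd c) (loc \<beta> d c)) cs)"

definition Rec :: "nat \<Rightarrow> cas list \<Rightarrow> fform" where
"Rec d cs = Conj (Disjs (map gd (filter internal cs)))
   (Disjs [Eq (Var (6*d+6)) (aterm d), Eq (Var (6*d+6)) (Var (6*d+2)), Eq (Var (6*d+6)) (Var (6*d+4))])"

fun Phi :: "(nat \<Rightarrow> fform) \<Rightarrow> nat \<Rightarrow> nat \<Rightarrow> cas list \<Rightarrow> fform" where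
"Phi \<beta> 0 d cs = Ex (6*d+2) (Ex (6*d+4) (All (6*d+6) (Local \<beta> d cs)))"
| "Phi \<beta> (Suc k) d cs = Ex (6*d+2) (Ex (6*d+4) (All (6*d+6)
      (Conj (Local \<beta> d cs) (Impl (Rec d cs) (Phi \<beta> k (d+1) (children d cs))))))"

definition spos :: "bool list \<Rightarrow> nat \<Rightarrow> bool" where
"spos w p = (1 \<le> p \<and> p \<le> length w \<and> w ! (p - 1))"

definition M :: "bool list \<Rightarrow> (nat \<Rightarrow> bool) \<Rightarrow> nat \<Rightarrow> nat \<Rightarrow> nat \<Rightarrow> nat \<Rightarrow> bool" where
"M w B lo hi x y = (y = x + (hi - lo) \<and> (\<forall>i\<le>hi - lo. spos w (x+i) = B (lo+i)))"

lemma sat_S[simp]: "sat w \<sigma> (S a) = spos w (teval w \<sigma> a)"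
  by (simp add: spos_def Let_def)

lemma qc_loc: "(\<forall>p. qcount (\<beta> p) = 0) \<Longrightarrow> qcount (loc \<beta> d c) = 0"
  by (simp add: loc_def Let_def)

lemma qc_Phi: "(\<forall>p. qcount (\<beta> p) = 0) \<Longrightarrow> (\<forall>c\<in>set cs. qcount (gd c) = 0) \<Longrightarrow>
   qcount (Phi \<beta> k d cs) = 3 * (k+1)"
proof (induction k arbitrary: d cs)
  case 0
  have "sum_list (map (qcount \<circ> (\<lambda>c. Conj (gd c) (loc \<beta> d c))) cs) = 0"
    using 0 by (induction cs) (auto simp: qc_loc)
  then show ?case by (simp add: Local_def)
next
  case (Suc k)
  have "sum_list (map (qcount \<circ> (\<lambda>c. Conj (gd c) (loc \<beta> d c))) cs) = 0"
    using Suc by (induction cs) (auto simp: qc_loc)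
  moreover have "sum_list (map (qcount \<circ> gd) (filter internal cs)) = 0"
    using Suc.prems by (induction cs) auto
  moreover have "\<forall>c\<in>set (children d cs). qcount (gd c) = 0"
    using Suc.prems by (auto simp: children_def childs_def)
  ultimately show ?case using Suc by (simp add: Local_def Rec_def)
qed

lemma all_le_1: "(\<forall>i::nat\<le>1. P i) = (P 0 \<and> P 1)"
  by (auto simp: le_Suc_eq)
lemma all_le_2: "(\<forall>i::nat\<le>2. P i) = (P 0 \<and> P 1 \<and> P 2)"
  by (auto simp: le_Suc_eq numeral_2_eq_2)

lemma M_split:
  assumes "lo \<le> s" "s \<le> hi"
  shows "(M w B lo s x z \<and> M w B s hi z y) \<longleftrightarrow> (M w B lo hi x y \<and> z = x + (s - lo))"
proof
  assume A: "M w B lo s x z \<and> M w B s hi z y"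
  then have z: "z = x + (s - lo)" and y: "y = x + (hi - lo)" using assms by (auto simp: M_def)
  have "\<forall>i\<le>hi - lo. spos w (x+i) = B (lo+i)"
  proof (intro allI impI)
    fix i assume i: "i \<le> hi - lo"
    show "spos w (x+i) = B (lo+i)"
    proof (cases "i \<le> s - lo")
      case True then show ?thesis using A by (auto simp: M_def)
    next
      case False
      define j where "j = i - (s - lo)"
      have j: "i = (s - lo) + j" "j \<le> hi - s" using i assms False unfolding j_def by linarith+
      have "spos w (z+j) = B (s+j)" using A j by (auto simp: M_def)
      then show ?thesis using z j assms by (simp add: add.assoc)
    qed
  qed
  then show "M w B lo hi x y \<and> z = x + (s - lo)" using y z by (simp add: M_def)
next
  assume A: "M w B lo hi x y \<and> z = x + (s - lo)"
  have "\<forall>j\<le>hi - s. spos w (z+j) = B (s+j)"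
  proof (intro allI impI)
    fix j assume "j \<le> hi - s"
    then have "s - lo + j \<le> hi - lo" using assms by linarith
    then have "spos w (x + (s - lo + j)) = B (lo + (s - lo + j))" using A by (auto simp: M_def)
    then show "spos w (z+j) = B (s+j)" using A assms by (simp add: add.assoc)
  qed
  then show "M w B lo s x z \<and> M w B s hi z y" using A assms by (auto simp: M_def)
qed


lemma upd_sat: "free_vars \<phi> \<subseteq> {x. x \<le> 6*d} \<union> {x. odd x} \<Longrightarrow>
  sat w (\<sigma>(6*d+2 := z1, 6*d+4 := z2, 6*d+6 := a)) \<phi> = sat w \<sigma> \<phi>"
  by (rule sat_cong) auto

lemma upd_teval: "tvars t \<subseteq> {x. x \<le> 6*d} \<Longrightarrow>
  teval w (\<sigma>(6*d+2 := z1, 6*d+4 := z2, 6*d+6 := a)) t = teval w \<sigma> t"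
  by (rule teval_cong) auto

lemma upd_aterm: "teval w (\<sigma>(6*d+2 := z1, 6*d+4 := z2, 6*d+6 := a)) (aterm d) = teval w \<sigma> (aterm d)"
  by (simp add: aterm_def)

lemma loc_sem0:
  assumes b: "\<And>p. sat w \<sigma>' (\<beta> p) = B p"
  and e: "teval w \<sigma>' (en c) = y" and at: "teval w \<sigma>' (aterm d) = x"
  and v: "\<sigma>' (6*d+2) = z1" "\<sigma>' (6*d+4) = z2" "\<sigma>' (6*d+6) = a"
  shows "sat w \<sigma>' (loc \<beta> d c) =
   (let L = chi c - clo c in
    if L = 0 then x = y \<and> spos w x = B (clo c)
    else if L = 1 then x < y \<and> \<not> (x < a \<and> a < y) \<and> spos w x = B (clo c) \<and> spos w y = B (chi c)
    else if L = 2 then x < z1 \<and> z1 < y \<and> (x < a \<and> a < y \<longrightarrow> a = z1) \<and> spos w x = B (clo c)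
       \<and> spos w z1 = B (clo c + 1) \<and> spos w y = B (chi c)
    else x < z1 \<and> z1 < z2 \<and> z2 < y)"
proof -
  have t1: "teval w \<sigma>' (Var (6*d+2)) = z1" "teval w \<sigma>' (Var (6*d+4)) = z2" "teval w \<sigma>' (Var (6*d+6)) = a"
    using v by simp_all
  show ?thesis
    unfolding loc_def Let_def
    by (simp only: if_distrib[where f="sat w \<sigma>'"] sat.simps(3,4,6,7,9) sat_S sat_Conjs sat_Iff list.set ball_simps insert_iff
        b e at t1 empty_iff simp_thms(21)) 
qed

lemma loc_sem:
  assumes \<beta>: "\<forall>p. free_vars (\<beta> p) \<subseteq> {x. odd x}"
  and ev: "tvars (en c) \<subseteq> {x. x \<le> 6*d}"
  shows "sat w (\<sigma>(6*d+2 := z1, 6*d+4 := z2, 6*d+6 := a)) (loc \<beta> d c) =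
   (let x = teval w \<sigma> (aterm d); y = teval w \<sigma> (en c); B = (\<lambda>p. sat w \<sigma> (\<beta> p)); L = chi c - clo c in
    if L = 0 then x = y \<and> spos w x = B (clo c)
    else if L = 1 then x < y \<and> \<not> (x < a \<and> a < y) \<and> spos w x = B (clo c) \<and> spos w y = B (chi c)
    else if L = 2 then x < z1 \<and> z1 < y \<and> (x < a \<and> a < y \<longrightarrow> a = z1) \<and> spos w x = B (clo c)
       \<and> spos w z1 = B (clo c + 1) \<and> spos w y = B (chi c)
    else x < z1 \<and> z1 < z2 \<and> z2 < y)"
proof -
  have b: "\<And>p. sat w (\<sigma>(6*d+2 := z1, 6*d+4 := z2, 6*d+6 := a)) (\<beta> p) = sat w \<sigma> (\<beta> p)"
    using \<beta> by (intro upd_sat) auto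
  have e: "teval w (\<sigma>(6*d+2 := z1, 6*d+4 := z2, 6*d+6 := a)) (en c) = teval w \<sigma> (en c)"
    using ev by (rule upd_teval)
  have v: "(\<sigma>(6*d+2 := z1, 6*d+4 := z2, 6*d+6 := a)) (6*d+2) = z1"
      "(\<sigma>(6*d+2 := z1, 6*d+4 := z2, 6*d+6 := a)) (6*d+4) = z2"
      "(\<sigma>(6*d+2 := z1, 6*d+4 := z2, 6*d+6 := a)) (6*d+6) = a" by simp_all
  show ?thesis using loc_sem0[OF b e upd_aterm v] by (simp only: Let_def)
qed

lemma Local_sem:
  assumes \<beta>: "\<forall>p. free_vars (\<beta> p) \<subseteq> {x. odd x}"
  and vars: "\<forall>c\<in>set cs. free_vars (gd c) \<subseteq> {x. x \<le> 6*d} \<and> tvars (en c) \<subseteq> {x. x \<le> 6*d}"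
  and c: "c \<in> set cs" "sat w \<sigma> (gd c)" and uniq: "\<forall>c'\<in>set cs. sat w \<sigma> (gd c') \<longrightarrow> c' = c"
  shows "sat w (\<sigma>(6*d+2 := z1, 6*d+4 := z2, 6*d+6 := a)) (Local \<beta> d cs) =
         sat w (\<sigma>(6*d+2 := z1, 6*d+4 := z2, 6*d+6 := a)) (loc \<beta> d c)"
proof -
  let ?s = "\<sigma>(6*d+2 := z1, 6*d+4 := z2, 6*d+6 := a)"
  have g: "\<And>c'. c' \<in> set cs \<Longrightarrow> sat w ?s (gd c') = sat w \<sigma> (gd c')"
    using vars by (intro upd_sat) auto
  have "sat w ?s (Local \<beta> d cs) = (\<exists>c'\<in>set cs. sat w ?s (gd c') \<and> sat w ?s (loc \<beta> d c'))"
    unfolding Local_def by simp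
  also have "\<dots> = (\<exists>c'\<in>set cs. sat w \<sigma> (gd c') \<and> sat w ?s (loc \<beta> d c'))"
    using g by (intro bex_cong refl) simp
  also have "\<dots> = sat w ?s (loc \<beta> d c)"
  proof
    assume "\<exists>c'\<in>set cs. sat w \<sigma> (gd c') \<and> sat w ?s (loc \<beta> d c')"
    then obtain c' where "c' \<in> set cs" "sat w \<sigma> (gd c')" "sat w ?s (loc \<beta> d c')" by blast
    moreover then have "c' = c" using uniq by blast
    ultimately show "sat w ?s (loc \<beta> d c)" by simp
  next
    assume "sat w ?s (loc \<beta> d c)"
    then show "\<exists>c'\<in>set cs. sat w \<sigma> (gd c') \<and> sat w ?s (loc \<beta> d c')" using c by blast
  qed
  finally show ?thesis .
qed

lemma Rec_sem:
  assumes vars: "\<forall>c\<in>set cs. free_vars (gd c) \<subseteq> {x. x \<le> 6*d} \<and> tvars (en c) \<subseteq> {x. x \<le> 6*d}"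
  and c: "c \<in> set cs" "sat w \<sigma> (gd c)" and uniq: "\<forall>c'\<in>set cs. sat w \<sigma> (gd c') \<longrightarrow> c' = c"
  shows "sat w (\<sigma>(6*d+2 := z1, 6*d+4 := z2, 6*d+6 := a)) (Rec d cs) =
         (internal c \<and> (a = teval w \<sigma> (aterm d) \<or> a = z1 \<or> a = z2))"
proof -
  let ?s = "\<sigma>(6*d+2 := z1, 6*d+4 := z2, 6*d+6 := a)"
  have g: "\<And>c'. c' \<in> set cs \<Longrightarrow> sat w ?s (gd c') = sat w \<sigma> (gd c')"
    using vars by (intro upd_sat) auto
  have "sat w ?s (Disjs (map gd (filter internal cs))) = (\<exists>c'\<in>set cs. internal c' \<and> sat w ?s (gd c'))"
    by auto
  also have "\<dots> = (\<exists>c'\<in>set cs. internal c' \<and> sat w \<sigma> (gd c'))"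
    using g by (intro bex_cong refl) simp
  also have "\<dots> = internal c"
  proof
    assume "\<exists>c'\<in>set cs. internal c' \<and> sat w \<sigma> (gd c')"
    then obtain c' where "c' \<in> set cs" "internal c'" "sat w \<sigma> (gd c')" by blast
    moreover then have "c' = c" using uniq by blast
    ultimately show "internal c" by simp
  next
    assume "internal c"
    then show "\<exists>c'\<in>set cs. internal c' \<and> sat w \<sigma> (gd c')" using c by blast
  qed
  finally have I: "sat w ?s (Disjs (map gd (filter internal cs))) = internal c" .
  have "sat w ?s (Disjs [Eq (Var (6*d+6)) (aterm d), Eq (Var (6*d+6)) (Var (6*d+2)), Eq (Var (6*d+6)) (Var (6*d+4))])
      = (a = teval w \<sigma> (aterm d) \<or> a = z1 \<or> a = z2)"
    using upd_aterm[of w \<sigma> d z1 z2 a] by simp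
  then show ?thesis unfolding Rec_def using I by simp
qed

lemma leaf:
  assumes rng: "\<forall>x. \<sigma> x \<in> {1..length w}"
  and \<beta>: "\<forall>p. free_vars (\<beta> p) \<subseteq> {x. odd x}"
  and ev: "tvars (en c) \<subseteq> {x. x \<le> 6*d}"
  and L: "chi c - clo c \<le> 2" "clo c \<le> chi c"
  shows "(\<exists>z1\<in>{1..length w}. \<exists>z2\<in>{1..length w}. \<forall>a\<in>{1..length w}.
            sat w (\<sigma>(6*d+2 := z1, 6*d+4 := z2, 6*d+6 := a)) (loc \<beta> d c))
   \<longleftrightarrow> M w (\<lambda>p. sat w \<sigma> (\<beta> p)) (clo c) (chi c) (teval w \<sigma> (aterm d)) (teval w \<sigma> (en c))"
  (is "?L \<longleftrightarrow> ?R")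
proof -
  define x where "x = teval w \<sigma> (aterm d)"
  define y where "y = teval w \<sigma> (en c)"
  define B where "B = (\<lambda>p. sat w \<sigma> (\<beta> p))"
  define n where "n = length w"
  have xr: "1 \<le> x" "x \<le> n" using rng unfolding x_def n_def aterm_def by (auto split: if_splits)
  have yr: "1 \<le> y" "y \<le> n"
  proof -
    have "\<forall>v. 1 \<le> teval w \<sigma> v \<and> teval w \<sigma> v \<le> n" using rng xr unfolding n_def
      by (intro allI, case_tac v) auto
    then show "1 \<le> y" "y \<le> n" unfolding y_def by auto
  qed
  have ls: "\<And>z1 z2 a. sat w (\<sigma>(6*d+2 := z1, 6*d+4 := z2, 6*d+6 := a)) (loc \<beta> d c) =
   (let L = chi c - clo c in
    if L = 0 then x = y \<and> spos w x = B (clo c)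
    else if L = 1 then x < y \<and> \<not> (x < a \<and> a < y) \<and> spos w x = B (clo c) \<and> spos w y = B (chi c)
    else if L = 2 then x < z1 \<and> z1 < y \<and> (x < a \<and> a < y \<longrightarrow> a = z1) \<and> spos w x = B (clo c)
       \<and> spos w z1 = B (clo c + 1) \<and> spos w y = B (chi c)
    else x < z1 \<and> z1 < z2 \<and> z2 < y)"
    using loc_sem[OF \<beta> ev] unfolding x_def y_def B_def Let_def by simp
  have R: "?R = (y = x + (chi c - clo c) \<and> (\<forall>i\<le>chi c - clo c. spos w (x+i) = B (clo c + i)))"
    unfolding M_def x_def y_def B_def ..
  consider "chi c - clo c = 0" | "chi c - clo c = 1" | "chi c - clo c = 2" using L(1) by linarith
  then show ?thesis
  proof cases
    case 1
    then have "chi c = clo c" using L by simp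
    then show ?thesis unfolding R ls using 1 xr n_def by auto
  next
    case 2
    then have hc: "chi c = clo c + 1" using L by simp
    have R2: "?R = (y = x + 1 \<and> spos w x = B (clo c) \<and> spos w y = B (chi c))"
      unfolding R by (simp only: 2 all_le_1) (auto simp add: hc)
    show ?thesis
    proof
      assume ?L
      then obtain z1 z2 where A: "\<forall>a\<in>{1..n}. x < y \<and> \<not> (x < a \<and> a < y) \<and> spos w x = B (clo c) \<and> spos w y = B (chi c)"
        unfolding ls Let_def n_def using 2 by auto
      then have "x < y" "spos w x = B (clo c)" "spos w y = B (chi c)" using xr by auto
      moreover have "y = x + 1"
      proof (rule ccontr)
        assume "y \<noteq> x + 1"
        then have "x + 1 \<in> {1..n}" "x < x + 1" "x + 1 < y" using \<open>x < y\<close> yr by auto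
        then show False using A by blast
      qed
      ultimately show ?R unfolding R2 by simp
    next
      assume ?R
      then have "y = x + 1" "spos w x = B (clo c)" "spos w y = B (chi c)"
        unfolding R2 by auto
      then show ?L unfolding ls Let_def using 2 xr n_def by auto
    qed
  next
    case 3
    then have hc: "chi c = clo c + 2" using L by simp
    have R3: "?R = (y = x + 2 \<and> spos w x = B (clo c) \<and> spos w (x+1) = B (clo c + 1) \<and> spos w y = B (chi c))"
      unfolding R by (simp only: 3 all_le_2) (auto simp add: hc numeral_2_eq_2)
    show ?thesis
    proof
      assume ?L
      then obtain z1 where A: "\<forall>a\<in>{1..n}. x < z1 \<and> z1 < y \<and> (x < a \<and> a < y \<longrightarrow> a = z1) \<and> spos w x = B (clo c)
       \<and> spos w z1 = B (clo c + 1) \<and> spos w y = B (chi c)"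
        unfolding ls Let_def n_def using 3 by auto
      then have h: "x < z1" "z1 < y" "spos w x = B (clo c)" "spos w z1 = B (clo c + 1)" "spos w y = B (chi c)"
        using xr by auto
      have "z1 = x + 1"
      proof -
        have "x + 1 \<in> {1..n}" "x < x + 1" "x + 1 < y" using h yr by auto
        then have "x < z1 \<and> z1 < y \<and> (x < x+1 \<and> x+1 < y \<longrightarrow> x+1 = z1)" using A by blast
        then show ?thesis using \<open>x + 1 < y\<close> by simp
      qed
      moreover have "y = x + 2"
      proof (rule ccontr)
        assume "y \<noteq> x + 2"
        then have "x + 2 \<in> {1..n}" "x < x + 2" "x + 2 < y" using h \<open>z1 = x + 1\<close> yr by auto
        then have "x < x+2 \<and> x+2 < y \<longrightarrow> x+2 = z1" using A by blast
        then show False using \<open>x + 2 < y\<close> \<open>z1 = x + 1\<close> by simp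
      qed
      ultimately show ?R unfolding R3 using h by (metis add_2_eq_Suc' add_Suc_right One_nat_def add.right_neutral)
    next
      assume ?R
      then have "y = x + 2" "spos w x = B (clo c)" "spos w (x+1) = B (clo c + 1)" "spos w y = B (chi c)"
        unfolding R3 by auto
      then show ?L unfolding ls Let_def using 3 xr yr n_def
        by (intro bexI[of _ "x+1"]) auto
    qed
  qed
qed


lemma M3:
  assumes "lo < s1" "s1 < s2" "s2 < hi" "1 \<le> x" "y \<le> n"
  shows "(\<exists>z1\<in>{1..n}. \<exists>z2\<in>{1..n}. x < z1 \<and> z1 < z2 \<and> z2 < y \<and>
           M w B lo s1 x z1 \<and> M w B s1 s2 z1 z2 \<and> M w B s2 hi z2 y) \<longleftrightarrow> M w B lo hi x y"
proof
  assume "\<exists>z1\<in>{1..n}. \<exists>z2\<in>{1..n}. x < z1 \<and> z1 < z2 \<and> z2 < y \<and>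
           M w B lo s1 x z1 \<and> M w B s1 s2 z1 z2 \<and> M w B s2 hi z2 y"
  then obtain z1 z2 where h: "M w B lo s1 x z1" "M w B s1 s2 z1 z2" "M w B s2 hi z2 y" by blast
  then have "M w B lo s2 x z2" using M_split[of lo s1 s2 w B x z1 z2] assms by auto
  then show "M w B lo hi x y" using h(3) M_split[of lo s2 hi w B x z2 y] assms by auto
next
  assume A: "M w B lo hi x y"
  define z1 where "z1 = x + (s1 - lo)"
  define z2 where "z2 = x + (s2 - lo)"
  have y: "y = x + (hi - lo)" using A by (simp add: M_def)
  have h2: "M w B lo s2 x z2" "M w B s2 hi z2 y" using A M_split[of lo s2 hi w B x z2 y] assms z2_def by auto
  have h1: "M w B lo s1 x z1" "M w B s1 s2 z1 z2" using h2(1) M_split[of lo s1 s2 w B x z1 z2] assms z1_def z2_def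
    by auto
  show "\<exists>z1\<in>{1..n}. \<exists>z2\<in>{1..n}. x < z1 \<and> z1 < z2 \<and> z2 < y \<and>
           M w B lo s1 x z1 \<and> M w B s1 s2 z1 z2 \<and> M w B s2 hi z2 y"
    using h1 h2 assms y unfolding z1_def z2_def by (intro bexI[of _ "x + (s1 - lo)"] bexI[of _ "x + (s2 - lo)"]) auto
qed

lemma split_arith:
  fixes L k :: nat
  assumes "3 \<le> L" "L \<le> 2 * 3 ^ Suc k"
  shows "L div 3 \<le> 2 * 3^k" "(L+1) div 3 \<le> 2*3^k" "L - L div 3 - (L+1) div 3 \<le> 2*3^k"
    "0 < L div 3" "0 < (L+1) div 3" "L div 3 + (L+1) div 3 < L"
proof -
  define m :: nat where "m = 3^k"
  have L: "L \<le> 6 * m" using assms(2) unfolding m_def by simp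
  obtain q r where qr: "L = 3*q + r" "r < 3" using div_mult_mod_eq[of L 3] mod_less_divisor[of 3 L]
    by (metis mult.commute zero_less_numeral)
  have "r = 0 \<or> r = 1 \<or> r = 2" using qr by linarith
  then have A: "L div 3 = q \<and> (L+1) div 3 = (if r = 2 then q+1 else q)" using qr by auto
  have "q \<le> 2*m" "r \<ge> 1 \<longrightarrow> q + 1 \<le> 2*m" "1 \<le> q" using qr L assms(1) by linarith+
  then show "L div 3 \<le> 2 * 3^k" "(L+1) div 3 \<le> 2*3^k" "L - L div 3 - (L+1) div 3 \<le> 2*3^k"
    "0 < L div 3" "0 < (L+1) div 3" "L div 3 + (L+1) div 3 < L"
    using A qr unfolding m_def[symmetric] by (auto split: if_splits)
qed


lemma tree_sem:
  assumes "\<forall>p. free_vars (\<beta> p) \<subseteq> {x. odd x}"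
  and "\<forall>x. \<sigma> x \<in> {1..length w}"
  and "\<forall>c\<in>set cs. free_vars (gd c) \<subseteq> {x. x \<le> 6*d} \<and> tvars (en c) \<subseteq> {x. x \<le> 6*d}"
  and "\<forall>c\<in>set cs. clo c \<le> chi c \<and> chi c - clo c \<le> 2*3^k"
  and "c \<in> set cs" "sat w \<sigma> (gd c)" "\<forall>c'\<in>set cs. sat w \<sigma> (gd c') \<longrightarrow> c' = c"
  shows "sat w \<sigma> (Phi \<beta> k d cs) \<longleftrightarrow>
         M w (\<lambda>p. sat w \<sigma> (\<beta> p)) (clo c) (chi c) (teval w \<sigma> (aterm d)) (teval w \<sigma> (en c))"
  using assms
proof (induction k arbitrary: d cs \<sigma> c)
  case 0
  note \<beta> = 0(1) and rng = 0(2) and vars = 0(3) and lens = 0(4) and c = 0(5,6) and uniq = 0(7)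
  have "sat w \<sigma> (Phi \<beta> 0 d cs) = (\<exists>z1\<in>{1..length w}. \<exists>z2\<in>{1..length w}. \<forall>a\<in>{1..length w}.
            sat w (\<sigma>(6*d+2 := z1, 6*d+4 := z2, 6*d+6 := a)) (loc \<beta> d c))"
    by (simp only: Phi.simps sat.simps Local_sem[OF \<beta> vars c uniq])
  also have "\<dots> = M w (\<lambda>p. sat w \<sigma> (\<beta> p)) (clo c) (chi c) (teval w \<sigma> (aterm d)) (teval w \<sigma> (en c))"
  proof (rule leaf[OF rng \<beta>])
    show "tvars (en c) \<subseteq> {x. x \<le> 6*d}" using vars c by blast
    show "chi c - clo c \<le> 2" "clo c \<le> chi c" using lens c by auto
  qed
  finally show ?case .
next
  case (Suc k)
  note \<beta> = Suc(2) and rng = Suc(3) and vars = Suc(4) and lens = Suc(5) and c = Suc(6,7) and uniq = Suc(8)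
  define n where "n = length w"
  define x where "x = teval w \<sigma> (aterm d)"
  define y where "y = teval w \<sigma> (en c)"
  define B where "B = (\<lambda>p. sat w \<sigma> (\<beta> p))"
  have xr: "1 \<le> x" "x \<le> n" using rng unfolding x_def n_def aterm_def by (auto split: if_splits)
  have yr: "1 \<le> y" "y \<le> n"
  proof -
    have "\<forall>v. 1 \<le> teval w \<sigma> v \<and> teval w \<sigma> v \<le> n" using rng xr unfolding n_def
      by (intro allI, case_tac v) auto
    then show "1 \<le> y" "y \<le> n" unfolding y_def by auto
  qed
  have ev: "tvars (en c) \<subseteq> {x. x \<le> 6*d}" using vars c by auto
  let ?s = "\<lambda>z1 z2 a. \<sigma>(6*d+2 := z1, 6*d+4 := z2, 6*d+6 := a)"
  have unf: "sat w \<sigma> (Phi \<beta> (Suc k) d cs) = (\<exists>z1\<in>{1..n}. \<exists>z2\<in>{1..n}. \<forall>a\<in>{1..n}.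
            sat w (?s z1 z2 a) (loc \<beta> d c) \<and> (internal c \<and> (a = x \<or> a = z1 \<or> a = z2) \<longrightarrow>
             sat w (?s z1 z2 a) (Phi \<beta> k (d+1) (children d cs))))"
    unfolding n_def x_def by (simp only: Phi.simps sat.simps Local_sem[OF \<beta> vars c uniq] Rec_sem[OF vars c uniq])
  show ?case
  proof (cases "internal c")
    case False
    then have "chi c - clo c \<le> 2" unfolding internal_def by simp
    then have "(\<exists>z1\<in>{1..n}. \<exists>z2\<in>{1..n}. \<forall>a\<in>{1..n}. sat w (?s z1 z2 a) (loc \<beta> d c)) =
      M w (\<lambda>p. sat w \<sigma> (\<beta> p)) (clo c) (chi c) (teval w \<sigma> (aterm d)) (teval w \<sigma> (en c))"
      unfolding n_def by (rule leaf[OF rng \<beta> ev]) (use lens c in auto)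
    then show ?thesis unfolding unf using False by simp
  next
    case True
    then have L3: "3 \<le> chi c - clo c" unfolding internal_def by simp
    have Lk: "chi c - clo c \<le> 2 * 3 ^ Suc k" "clo c \<le> chi c" using lens c by auto
    note sa = split_arith[OF L3 Lk(1)]
    have s: "clo c < spl1 c" "spl1 c < spl2 c" "spl2 c < chi c"
    proof -
      obtain a b L where ab: "a = (chi c - clo c) div 3" "b = (chi c - clo c + 1) div 3" "L = chi c - clo c"
        by blast
      have f: "0 < a" "0 < b" "a + b < L" "clo c + L = chi c" using sa(4-6) Lk(2) unfolding ab by auto
      show "clo c < spl1 c" "spl1 c < spl2 c" "spl2 c < chi c"
        unfolding spl1_def spl2_def ab[symmetric] using f by linarith+
    qed
    have locs: "\<And>z1 z2 a. sat w (?s z1 z2 a) (loc \<beta> d c) = (x < z1 \<and> z1 < z2 \<and> z2 < y)"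
    proof -
      have nz: "(chi c - clo c = 0) = False" "(chi c - clo c = 1) = False" "(chi c - clo c = 2) = False"
        using L3 by auto
      show "\<And>z1 z2 a. sat w (?s z1 z2 a) (loc \<beta> d c) = (x < z1 \<and> z1 < z2 \<and> z2 < y)"
        unfolding x_def y_def by (simp only: loc_sem[OF \<beta> ev] Let_def nz if_False)
    qed
    let ?ch = "children d cs"
    have chvars: "\<forall>c'\<in>set ?ch. free_vars (gd c') \<subseteq> {x. x \<le> 6*(d+1)} \<and> tvars (en c') \<subseteq> {x. x \<le> 6*(d+1)}"
    proof
      fix c' assume "c' \<in> set ?ch"
      then obtain c'' where c'': "c'' \<in> set cs" "c' \<in> set (childs d c'')" unfolding children_def by auto
      have v: "\<forall>x\<in>free_vars (gd c''). x \<le> 6*d" "\<forall>x\<in>tvars (en c''). x \<le> 6*d" using vars c''(1) by auto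
      show "free_vars (gd c') \<subseteq> {x. x \<le> 6*(d+1)} \<and> tvars (en c') \<subseteq> {x. x \<le> 6*(d+1)}"
        using c''(2) unfolding childs_def aterm_def by (auto split: if_splits dest!: bspec[OF v(1)] bspec[OF v(2)])
    qed
    have chlens: "\<forall>c'\<in>set ?ch. clo c' \<le> chi c' \<and> chi c' - clo c' \<le> 2*3^k"
    proof
      fix c' assume "c' \<in> set ?ch"
      then obtain c'' where c'': "c'' \<in> set cs" "internal c''" "c' \<in> set (childs d c'')"
        unfolding children_def by auto
      have "3 \<le> chi c'' - clo c''" "chi c'' - clo c'' \<le> 2 * 3 ^ Suc k" "clo c'' \<le> chi c''"
        using c'' lens unfolding internal_def by auto
      note sa' = split_arith[OF this(1,2)]
      obtain a b L where ab: "a = (chi c'' - clo c'') div 3" "b = (chi c'' - clo c'' + 1) div 3" "L = chi c'' - clo c''"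
        by blast
      have f: "a \<le> 2*3^k" "b \<le> 2*3^k" "L - a - b \<le> 2*3^k" "a + b < L" "clo c'' + L = chi c''"
        using sa' \<open>clo c'' \<le> chi c''\<close> unfolding ab by auto
      have cs3: "c' = Cas (Conj (gd c'') (Eq (Var (6*d+6)) (aterm d))) (Var (6*d+2)) (clo c'') (clo c'' + a) \<or>
        c' = Cas (Conj (gd c'') (Eq (Var (6*d+6)) (Var (6*d+2)))) (Var (6*d+4)) (clo c'' + a) (clo c'' + a + b) \<or>
        c' = Cas (Conj (gd c'') (Eq (Var (6*d+6)) (Var (6*d+4)))) (en c'') (clo c'' + a + b) (chi c'')"
        using c''(3) unfolding childs_def spl1_def spl2_def ab(1,2)[symmetric] by simp
      show "clo c' \<le> chi c' \<and> chi c' - clo c' \<le> 2*3^k"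
        using cs3 f by (elim disjE) simp_all

    qed
    have IHapp: "\<And>z1 z2 a c'. z1 \<in> {1..n} \<Longrightarrow> z2 \<in> {1..n} \<Longrightarrow> a \<in> {1..n} \<Longrightarrow> x < z1 \<Longrightarrow> z1 < z2 \<Longrightarrow>
        c' \<in> set (childs d c) \<Longrightarrow> sat w (?s z1 z2 a) (gd c') \<Longrightarrow>
        sat w (?s z1 z2 a) (Phi \<beta> k (d+1) ?ch) =
          M w B (clo c') (chi c') a (teval w (?s z1 z2 a) (en c'))"
    proof -
      fix z1 z2 a c'
      assume r: "z1 \<in> {1..n}" "z2 \<in> {1..n}" "a \<in> {1..n}" and o: "x < z1" "z1 < z2"
        and c': "c' \<in> set (childs d c)" "sat w (?s z1 z2 a) (gd c')"
      have rng': "\<forall>v. (?s z1 z2 a) v \<in> {1..length w}" using rng r unfolding n_def by auto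
      have c'in: "c' \<in> set ?ch" using c' True c unfolding children_def by auto
      have g: "\<And>c''. c'' \<in> set cs \<Longrightarrow> sat w (?s z1 z2 a) (gd c'') = sat w \<sigma> (gd c'')"
        using vars by (intro upd_sat) auto
      have xs: "teval w (?s z1 z2 a) (aterm d) = x" unfolding x_def by (rule upd_aterm)
      have uniq': "\<forall>c''\<in>set ?ch. sat w (?s z1 z2 a) (gd c'') \<longrightarrow> c'' = c'"
      proof (intro ballI impI)
        fix c'' assume c''in: "c'' \<in> set ?ch" and sc'': "sat w (?s z1 z2 a) (gd c'')"
        then obtain p where p: "p \<in> set cs" "internal p" "c'' \<in> set (childs d p)"
          unfolding children_def by auto
        have "sat w (?s z1 z2 a) (gd p)" using p(3) sc'' unfolding childs_def by auto
        then have "p = c" using g p(1) uniq by auto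
        then show "c'' = c'" using p(3) sc'' c' o xs unfolding childs_def by auto
      qed
      have IH: "sat w (?s z1 z2 a) (Phi \<beta> k (d+1) ?ch) =
         M w (\<lambda>p. sat w (?s z1 z2 a) (\<beta> p)) (clo c') (chi c') (teval w (?s z1 z2 a) (aterm (d+1)))
            (teval w (?s z1 z2 a) (en c'))"
        by (rule Suc.IH[OF \<beta> rng' chvars chlens c'in c'(2) uniq'])
      have bb: "(\<lambda>p. sat w (?s z1 z2 a) (\<beta> p)) = B"
        unfolding B_def using \<beta> by (intro ext upd_sat) auto
      have at: "teval w (?s z1 z2 a) (aterm (d+1)) = a" unfolding aterm_def by simp
      show "sat w (?s z1 z2 a) (Phi \<beta> k (d+1) ?ch) =
          M w B (clo c') (chi c') a (teval w (?s z1 z2 a) (en c'))"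
        using IH bb at by simp
    qed
    have ye: "\<And>z1 z2 a. teval w (?s z1 z2 a) (en c) = y" unfolding y_def using ev by (rule upd_teval)
    have gc: "\<And>z1 z2 a. sat w (?s z1 z2 a) (gd c) = sat w \<sigma> (gd c)"
      using vars c by (intro upd_sat) auto
    have body: "\<And>z1 z2. z1 \<in> {1..n} \<Longrightarrow> z2 \<in> {1..n} \<Longrightarrow>
      (\<forall>a\<in>{1..n}. sat w (?s z1 z2 a) (loc \<beta> d c) \<and> (internal c \<and> (a = x \<or> a = z1 \<or> a = z2) \<longrightarrow>
             sat w (?s z1 z2 a) (Phi \<beta> k (d+1) ?ch))) =
      (x < z1 \<and> z1 < z2 \<and> z2 < y \<and> M w B (clo c) (spl1 c) x z1 \<and> M w B (spl1 c) (spl2 c) z1 z2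
         \<and> M w B (spl2 c) (chi c) z2 y)"
    proof -
      fix z1 z2 assume r: "z1 \<in> {1..n}" "z2 \<in> {1..n}"
      have xr': "x \<in> {1..n}" using xr by simp
      let ?c0 = "Cas (Conj (gd c) (Eq (Var (6*d+6)) (aterm d))) (Var (6*d+2)) (clo c) (spl1 c)"
      let ?c1 = "Cas (Conj (gd c) (Eq (Var (6*d+6)) (Var (6*d+2)))) (Var (6*d+4)) (spl1 c) (spl2 c)"
      let ?c2 = "Cas (Conj (gd c) (Eq (Var (6*d+6)) (Var (6*d+4)))) (en c) (spl2 c) (chi c)"
      have c0: "?c0 \<in> set (childs d c)" "?c1 \<in> set (childs d c)" "?c2 \<in> set (childs d c)"
        unfolding childs_def by auto
      have g0: "sat w (?s z1 z2 x) (gd ?c0)"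
        using gc[of z1 z2 x] c(2) upd_aterm[of w \<sigma> d z1 z2 x] unfolding x_def by simp
      have g1: "sat w (?s z1 z2 z1) (gd ?c1)"
        using gc[of z1 z2 z1] c(2) by simp
      have g2: "sat w (?s z1 z2 z2) (gd ?c2)"
        using gc[of z1 z2 z2] c(2) by simp
      have M: "x < z1 \<Longrightarrow> z1 < z2 \<Longrightarrow>
           (sat w (?s z1 z2 x) (Phi \<beta> k (d+1) ?ch) = M w B (clo c) (spl1 c) x z1) \<and>
           (sat w (?s z1 z2 z1) (Phi \<beta> k (d+1) ?ch) = M w B (spl1 c) (spl2 c) z1 z2) \<and>
           (sat w (?s z1 z2 z2) (Phi \<beta> k (d+1) ?ch) = M w B (spl2 c) (chi c) z2 y)"
      proof -
        assume o: "x < z1" "z1 < z2"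
        have e0: "teval w (?s z1 z2 x) (en ?c0) = z1" by simp
        have e1: "teval w (?s z1 z2 z1) (en ?c1) = z2" by simp
        have e2: "teval w (?s z1 z2 z2) (en ?c2) = y" using ye[of z1 z2 z2] by simp
        show ?thesis
          using IHapp[OF r xr' o c0(1) g0] IHapp[OF r r(1) o c0(2) g1] IHapp[OF r r(2) o c0(3) g2] e0 e1 e2
          by simp
      qed
      show "?thesis z1 z2"
      proof
        assume A: "\<forall>a\<in>{1..n}. sat w (?s z1 z2 a) (loc \<beta> d c) \<and> (internal c \<and> (a = x \<or> a = z1 \<or> a = z2) \<longrightarrow>
             sat w (?s z1 z2 a) (Phi \<beta> k (d+1) ?ch))"
        have "sat w (?s z1 z2 x) (loc \<beta> d c)" using A xr' by blast
        then have o: "x < z1" "z1 < z2" "z2 < y" using locs by auto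
        have P: "sat w (?s z1 z2 x) (Phi \<beta> k (d+1) ?ch)" "sat w (?s z1 z2 z1) (Phi \<beta> k (d+1) ?ch)"
          "sat w (?s z1 z2 z2) (Phi \<beta> k (d+1) ?ch)" using A True xr' r by blast+
        show "x < z1 \<and> z1 < z2 \<and> z2 < y \<and> M w B (clo c) (spl1 c) x z1 \<and> M w B (spl1 c) (spl2 c) z1 z2
         \<and> M w B (spl2 c) (chi c) z2 y" using o P M[OF o(1,2)] by simp
      next
        assume A: "x < z1 \<and> z1 < z2 \<and> z2 < y \<and> M w B (clo c) (spl1 c) x z1 \<and> M w B (spl1 c) (spl2 c) z1 z2
         \<and> M w B (spl2 c) (chi c) z2 y"
        then have o: "x < z1" "z1 < z2" "z2 < y" by auto
        note MM = M[OF o(1,2)]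
        show "\<forall>a\<in>{1..n}. sat w (?s z1 z2 a) (loc \<beta> d c) \<and> (internal c \<and> (a = x \<or> a = z1 \<or> a = z2) \<longrightarrow>
             sat w (?s z1 z2 a) (Phi \<beta> k (d+1) ?ch))"
        proof (intro ballI conjI impI)
          fix a assume a: "a \<in> {1..n}"
          show "sat w (?s z1 z2 a) (loc \<beta> d c)" using locs o by simp
          assume "internal c \<and> (a = x \<or> a = z1 \<or> a = z2)"
          then consider "a = x" | "a = z1" | "a = z2" by blast
          then show "sat w (?s z1 z2 a) (Phi \<beta> k (d+1) ?ch)"
          proof cases
            case 1 then show ?thesis using A MM by simp
          next
            case 2 then show ?thesis using A MM by simp
          next
            case 3 then show ?thesis using A MM by simp
          qed
        qed
      qed
    qed
    have "sat w \<sigma> (Phi \<beta> (Suc k) d cs) = (\<exists>z1\<in>{1..n}. \<exists>z2\<in>{1..n}.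
      x < z1 \<and> z1 < z2 \<and> z2 < y \<and> M w B (clo c) (spl1 c) x z1 \<and> M w B (spl1 c) (spl2 c) z1 z2
         \<and> M w B (spl2 c) (chi c) z2 y)"
      unfolding unf using body by (intro bex_cong refl) auto
    also have "\<dots> = M w B (clo c) (chi c) x y"
      by (rule M3[OF s xr(1) yr(2)])
    finally show ?thesis unfolding x_def y_def B_def .
  qed
qed


lemma fv_loc:
  assumes "\<forall>q. free_vars (\<beta> q) \<subseteq> U"
  shows "free_vars (loc \<beta> d c) \<subseteq> U \<union> tvars (en c) \<union> tvars (aterm d) \<union> {6*d+2, 6*d+4, 6*d+6}"
proof -
  have b: "\<And>q. free_vars (\<beta> q) \<subseteq> U" using assms by blast
  show ?thesis unfolding loc_def Let_def using b by (simp; blast)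
qed

lemma fv_Phi:
  assumes "\<forall>q. free_vars (\<beta> q) \<subseteq> U"
  shows "free_vars (Phi \<beta> k d cs) \<subseteq> U \<union> (\<Union>c\<in>set cs. free_vars (gd c) \<union> tvars (en c)) \<union> tvars (aterm d)"
proof (induction k arbitrary: d cs)
  case 0
  have "free_vars (Local \<beta> d cs) \<subseteq> U \<union> (\<Union>c\<in>set cs. free_vars (gd c) \<union> tvars (en c)) \<union> tvars (aterm d) \<union> {6*d+2, 6*d+4, 6*d+6}"
    unfolding Local_def using fv_loc[OF assms] by fastforce
  then show ?case by auto
next
  case (Suc k)
  have L: "free_vars (Local \<beta> d cs) \<subseteq> U \<union> (\<Union>c\<in>set cs. free_vars (gd c) \<union> tvars (en c)) \<union> tvars (aterm d) \<union> {6*d+2, 6*d+4, 6*d+6}"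
    unfolding Local_def using fv_loc[OF assms] by fastforce
  have R: "free_vars (Rec d cs) \<subseteq> (\<Union>c\<in>set cs. free_vars (gd c) \<union> tvars (en c)) \<union> tvars (aterm d) \<union> {6*d+2, 6*d+4, 6*d+6}"
    unfolding Rec_def by auto
  have C: "(\<Union>c\<in>set (children d cs). free_vars (gd c) \<union> tvars (en c)) \<union> tvars (aterm (d+1)) \<subseteq>
     (\<Union>c\<in>set cs. free_vars (gd c) \<union> tvars (en c)) \<union> tvars (aterm d) \<union> {6*d+2, 6*d+4, 6*d+6}"
    unfolding children_def childs_def by (auto simp: aterm_def)
  have "free_vars (Phi \<beta> k (d+1) (children d cs)) \<subseteq> U \<union> (\<Union>c\<in>set cs. free_vars (gd c) \<union> tvars (en c)) \<union> tvars (aterm d) \<union> {6*d+2, 6*d+4, 6*d+6}"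
    using Suc.IH[of "d+1" "children d cs"] C by blast
  then show ?case using L R by auto
qed


lemma qf_Phi_root: "(\<forall>p. free_vars (\<beta> p) \<subseteq> V) \<Longrightarrow> free_vars (Phi \<beta> k 0 [Cas FTrue Max 1 n]) \<subseteq> V"
  using fv_Phi[of \<beta> V k 0 "[Cas FTrue Max 1 n]"] by (auto simp: aterm_def)

lemma tree_root:
  assumes \<beta>: "\<forall>p. free_vars (\<beta> p) \<subseteq> {x. odd x}"
  and rng: "\<forall>x. \<sigma> x \<in> {1..length w}"
  and K: "length w \<le> 3^K"
  shows "sat w \<sigma> (Phi \<beta> K 0 [Cas FTrue Max 1 (length w)]) \<longleftrightarrow>
     (\<forall>p\<in>{1..length w}. w ! (p-1) = sat w \<sigma> (\<beta> p))"
proof -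
  define n where "n = length w"
  have n1: "1 \<le> n" using rng unfolding n_def by (metis atLeastAtMost_iff le_trans)
  have K2: "n - 1 \<le> 2 * 3^K" using K unfolding n_def by simp
  have "sat w \<sigma> (Phi \<beta> K 0 [Cas FTrue Max 1 n]) \<longleftrightarrow>
     M w (\<lambda>p. sat w \<sigma> (\<beta> p)) 1 n (teval w \<sigma> (aterm 0)) (teval w \<sigma> Max)"
  proof -
    have p1: "\<forall>c\<in>set [Cas FTrue Max 1 n]. free_vars (gd c) \<subseteq> {x. x \<le> 6*0} \<and> tvars (en c) \<subseteq> {x. x \<le> 6*0}"
      by simp
    have p2: "\<forall>c\<in>set [Cas FTrue Max 1 n]. clo c \<le> chi c \<and> chi c - clo c \<le> 2*3^K" using n1 K2 by simp
    have p3: "Cas FTrue Max 1 n \<in> set [Cas FTrue Max 1 n]" "sat w \<sigma> (gd (Cas FTrue Max 1 n))"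
      "\<forall>c'\<in>set [Cas FTrue Max 1 n]. sat w \<sigma> (gd c') \<longrightarrow> c' = Cas FTrue Max 1 n" by simp_all
    show ?thesis using tree_sem[OF \<beta> rng p1 p2 p3] by simp
  qed
  also have "\<dots> \<longleftrightarrow> (\<forall>i\<le>n - 1. spos w (1+i) = sat w \<sigma> (\<beta> (1+i)))"
    using n1 unfolding M_def aterm_def n_def by auto
  also have "\<dots> \<longleftrightarrow> (\<forall>p\<in>{1..n}. w ! (p-1) = sat w \<sigma> (\<beta> p))"
  proof
    assume A: "\<forall>i\<le>n - 1. spos w (1+i) = sat w \<sigma> (\<beta> (1+i))"
    show "\<forall>p\<in>{1..n}. w ! (p-1) = sat w \<sigma> (\<beta> p)"
    proof
      fix p assume p: "p \<in> {1..n}"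
      then have "p - 1 \<le> n - 1" by auto
      then have "spos w (1+(p-1)) = sat w \<sigma> (\<beta> (1+(p-1)))" using A by blast
      moreover have "1 + (p - 1) = p" using p by auto
      ultimately have "spos w p = sat w \<sigma> (\<beta> p)" by simp
      then show "w ! (p-1) = sat w \<sigma> (\<beta> p)" using p unfolding spos_def n_def by auto
    qed
  next
    assume A: "\<forall>p\<in>{1..n}. w ! (p-1) = sat w \<sigma> (\<beta> p)"
    show "\<forall>i\<le>n - 1. spos w (1+i) = sat w \<sigma> (\<beta> (1+i))"
    proof (intro allI impI)
      fix i assume "i \<le> n - 1"
      then have "1 + i \<in> {1..n}" using n1 by auto
      then have "w ! ((1+i)-1) = sat w \<sigma> (\<beta> (1+i))" using A by blast
      then show "spos w (1+i) = sat w \<sigma> (\<beta> (1+i))" using \<open>1 + i \<in> {1..n}\<close> unfolding spos_def n_def by simp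
    qed
  qed
  finally show ?thesis unfolding n_def .
qed

lemma digits_inj:
  fixes t :: nat
  assumes "2 \<le> t"
  shows "i < t^r \<Longrightarrow> i' < t^r \<Longrightarrow> \<forall>j<r. (i div t^j) mod t = (i' div t^j) mod t \<Longrightarrow> i = i'"
proof (induction r arbitrary: i i')
  case 0 then show ?case by simp
next
  case (Suc r)
  have m: "i mod t = i' mod t" using Suc.prems(3) by (metis div_by_1 power_0 zero_less_Suc)
  have "\<forall>j<r. (i div t div t^j) mod t = (i' div t div t^j) mod t"
  proof (intro allI impI)
    fix j assume "j < r"
    then have "(i div t^(Suc j)) mod t = (i' div t^(Suc j)) mod t" using Suc.prems(3) by auto
    then show "(i div t div t^j) mod t = (i' div t div t^j) mod t" by (simp add: div_mult2_eq)
  qed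
  moreover have "i div t < t^r" "i' div t < t^r" using Suc.prems(1,2) assms
    by (simp_all add: div_less_iff_less_mult mult.commute)
  ultimately have "i div t = i' div t" using Suc.IH by blast
  then show ?case using m by (metis div_mult_mod_eq)
qed


definition Yt :: "nat \<Rightarrow> fterm" where "Yt v = (if v = 0 then Min else Var (2*v+1))"
definition dg :: "nat \<Rightarrow> nat \<Rightarrow> nat \<Rightarrow> nat" where "dg t j i = (i div t^j) mod t"
definition Sel :: "nat \<Rightarrow> nat \<Rightarrow> nat \<Rightarrow> fform" where
  "Sel t r i = Conjs (map (\<lambda>j. Eq (Var (2*(t+j)+1)) (Yt (dg t j i))) [0..<r])"
definition Ord :: "nat \<Rightarrow> fform" where
  "Ord t = Conjs (concat (map (\<lambda>u. map (\<lambda>v. Less (Yt u) (Yt v)) [Suc u..<t]) [0..<t]))"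
definition selvars :: "nat \<Rightarrow> nat \<Rightarrow> nat list" where
  "selvars t r = map (\<lambda>v. 2*v+1) [1..<t] @ map (\<lambda>j. 2*(t+j)+1) [0..<r]"
definition betaS :: "nat \<Rightarrow> nat \<Rightarrow> nat \<Rightarrow> (nat \<Rightarrow> bool list) \<Rightarrow> nat \<Rightarrow> fform" where
  "betaS t r k W p = Disjs (map (Sel t r) (filter (\<lambda>i. W i ! (p-1)) [0..<k]))"
definition PsiS :: "nat \<Rightarrow> nat \<Rightarrow> nat \<Rightarrow> nat \<Rightarrow> nat \<Rightarrow> (nat \<Rightarrow> bool list) \<Rightarrow> fform" where
  "PsiS t r k K n W = Exs (selvars t r) (Conj (Ord t) (Conj (Disjs (map (Sel t r) [0..<k]))
      (Phi (betaS t r k W) K 0 [Cas FTrue Max 1 n])))"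

lemma sum0: "(\<forall>x\<in>set xs. qcount x = 0) \<Longrightarrow> sum_list (map qcount xs) = 0"
  by (induction xs) auto

lemma qc_Sel: "qcount (Sel t r i) = 0"
  unfolding Sel_def qc_Conjs by (intro sum0) auto
lemma qc_Ord: "qcount (Ord t) = 0"
  unfolding Ord_def qc_Conjs by (intro sum0) auto
lemma qc_betaS: "qcount (betaS t r k W p) = 0"
  unfolding betaS_def qc_Disjs by (intro sum0) (auto simp: qc_Sel)

lemma qc_PsiS: "qcount (PsiS t r k K n W) = (t - 1) + r + 3 * (K+1)"
proof -
  have "qcount (Phi (betaS t r k W) K 0 [Cas FTrue Max 1 n]) = 3 * (K+1)"
    by (rule qc_Phi) (auto simp: qc_betaS)
  moreover have "sum_list (map qcount (map (Sel t r) [0..<k])) = 0" by (intro sum0) (auto simp: qc_Sel)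
  ultimately show ?thesis unfolding PsiS_def by (simp add: qc_Ord selvars_def)
qed

lemma sv1: "j < r \<Longrightarrow> 2*(t+j)+1 \<in> set (selvars t r)"
  unfolding selvars_def set_append set_map by (rule UnI2, rule image_eqI[where x=j]) auto

lemma sv2: "1 \<le> v \<Longrightarrow> v < t \<Longrightarrow> 2*v+1 \<in> set (selvars t r)"
  unfolding selvars_def set_append set_map by (rule UnI1, rule image_eqI[where x=v]) auto

lemma fv_Yt: "v < t \<Longrightarrow> tvars (Yt v) \<subseteq> set (selvars t r)"
  unfolding Yt_def using sv2[of v t r] by simp

lemma dg_less: "0 < t \<Longrightarrow> dg t j i < t"
  unfolding dg_def by simp

lemma fv_Sel:
  assumes "0 < t" shows "free_vars (Sel t r i) \<subseteq> set (selvars t r)"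
proof
  fix x assume "x \<in> free_vars (Sel t r i)"
  then obtain j where j: "j < r" "x = 2*(t+j)+1 \<or> x \<in> tvars (Yt (dg t j i))" unfolding Sel_def by auto
  show "x \<in> set (selvars t r)"
    using j sv1[of j r t] fv_Yt[of "dg t j i" t r] dg_less[OF assms, of j i] by blast
qed

lemma Ord_mem: "p \<in> set (concat (map (\<lambda>u. map (\<lambda>v. Less (Yt u) (Yt v)) [Suc u..<t]) [0..<t])) \<Longrightarrow>
   \<exists>u v. u < t \<and> v < t \<and> p = Less (Yt u) (Yt v)"
  by auto (use Suc_le_lessD less_trans in blast)

lemma fv_Ord: "free_vars (Ord t) \<subseteq> set (selvars t r)"
proof
  fix x assume "x \<in> free_vars (Ord t)"
  then obtain p where p: "p \<in> set (concat (map (\<lambda>u. map (\<lambda>v. Less (Yt u) (Yt v)) [Suc u..<t]) [0..<t]))"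
    "x \<in> free_vars p" unfolding Ord_def fv_Conjs by blast
  then obtain u v where "u < t" "v < t" "p = Less (Yt u) (Yt v)" using Ord_mem by blast
  then show "x \<in> set (selvars t r)" using p(2) fv_Yt[of u t r] fv_Yt[of v t r] by auto
qed

lemma fv_betaS:
  assumes "0 < t" shows "free_vars (betaS t r k W p) \<subseteq> set (selvars t r)"
proof
  fix x assume "x \<in> free_vars (betaS t r k W p)"
  then obtain i where "x \<in> free_vars (Sel t r i)" unfolding betaS_def by auto
  then show "x \<in> set (selvars t r)" using fv_Sel[OF assms] by blast
qed

lemma selvars_odd: "set (selvars t r) \<subseteq> {x. odd x}"
  unfolding selvars_def by auto

lemma sentence_PsiS: "0 < t \<Longrightarrow> sentence (PsiS t r k K n W)"
proof -
  assume t: "0 < t"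
  have "free_vars (Phi (betaS t r k W) K 0 [Cas FTrue Max 1 n]) \<subseteq> set (selvars t r)"
    by (rule qf_Phi_root) (use fv_betaS[OF t] in auto)
  moreover have "free_vars (Disjs (map (Sel t r) [0..<k])) \<subseteq> set (selvars t r)"
    using fv_Sel[OF t] by auto
  ultimately show ?thesis unfolding sentence_def PsiS_def fv_Exs using fv_Ord[of t r] by auto
qed

lemma teval_Yt: "teval w \<tau> (Yt v) = (if v = 0 then 1 else \<tau> (2*v+1))"
  unfolding Yt_def by simp

lemma sat_Sel: "sat w \<tau> (Sel t r i) = (\<forall>j<r. \<tau> (2*(t+j)+1) = teval w \<tau> (Yt (dg t j i)))"
  unfolding Sel_def by auto

lemma sat_Ord: "sat w \<tau> (Ord t) = (\<forall>u v. u < v \<and> v < t \<longrightarrow> teval w \<tau> (Yt u) < teval w \<tau> (Yt v))"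
  unfolding Ord_def by (auto simp del: teval.simps)

lemma sel_unique:
  assumes t: "2 \<le> t" and o: "sat w \<tau> (Ord t)"
  and i: "i < t^r" "i' < t^r" and s: "sat w \<tau> (Sel t r i)" "sat w \<tau> (Sel t r i')"
  shows "i = i'"
proof -
  have "\<forall>j<r. (i div t^j) mod t = (i' div t^j) mod t"
  proof (intro allI impI)
    fix j assume j: "j < r"
    have e: "teval w \<tau> (Yt (dg t j i)) = teval w \<tau> (Yt (dg t j i'))" using s j unfolding sat_Sel by metis
    have l: "dg t j i < t" "dg t j i' < t" using t dg_less by auto
    have "dg t j i = dg t j i'"
    proof (rule ccontr)
      assume "dg t j i \<noteq> dg t j i'"
      then consider "dg t j i < dg t j i'" | "dg t j i' < dg t j i" by linarith
      then show False using o e l unfolding sat_Ord by (cases) (metis less_irrefl)+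
    qed
    then show "(i div t^j) mod t = (i' div t^j) mod t" unfolding dg_def .
  qed
  then show ?thesis using digits_inj[OF t i] by blast
qed


lemma betaS_odd: "0 < t \<Longrightarrow> \<forall>p. free_vars (betaS t r k W p) \<subseteq> {x. odd x}"
  using fv_betaS selvars_odd by blast

lemma sat_betaS: "sat w \<tau> (betaS t r k W p) = (\<exists>i<k. W i ! (p-1) \<and> sat w \<tau> (Sel t r i))"
  unfolding betaS_def by auto

lemma body_sem:
  assumes t: "2 \<le> t" and k: "k \<le> t^r" and K: "length w \<le> 3^K"
  and W: "\<forall>i<k. length (W i) = length w"
  and rng: "\<forall>x. \<tau> x \<in> {1..length w}"
  and o: "sat w \<tau> (Ord t)"
  shows "sat w \<tau> (Conj (Ord t) (Conj (Disjs (map (Sel t r) [0..<k]))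
      (Phi (betaS t r k W) K 0 [Cas FTrue Max 1 (length w)]))) \<longleftrightarrow>
     (\<exists>i<k. sat w \<tau> (Sel t r i) \<and> w = W i)"
proof -
  have T: "sat w \<tau> (Phi (betaS t r k W) K 0 [Cas FTrue Max 1 (length w)]) \<longleftrightarrow>
     (\<forall>p\<in>{1..length w}. w ! (p-1) = sat w \<tau> (betaS t r k W p))"
    by (rule tree_root[OF betaS_odd rng K]) (use t in simp)
  have U: "\<And>i i'. i < k \<Longrightarrow> i' < k \<Longrightarrow> sat w \<tau> (Sel t r i) \<Longrightarrow> sat w \<tau> (Sel t r i') \<Longrightarrow> i = i'"
    using sel_unique[OF t o] k by (meson less_le_trans)
  show ?thesis
  proof
    assume A: "sat w \<tau> (Conj (Ord t) (Conj (Disjs (map (Sel t r) [0..<k]))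
      (Phi (betaS t r k W) K 0 [Cas FTrue Max 1 (length w)])))"
    then obtain i where i: "i < k" "sat w \<tau> (Sel t r i)" by auto
    have tr: "\<forall>p\<in>{1..length w}. w ! (p-1) = sat w \<tau> (betaS t r k W p)" using A T by simp
    have "w = W i"
    proof (rule nth_equalityI)
      show "length w = length (W i)" using W i by simp
      fix q assume q: "q < length w"
      then have "q + 1 \<in> {1..length w}" by simp
      then have "w ! ((q+1)-1) = sat w \<tau> (betaS t r k W (q+1))" using tr by blast
      then have "w ! q = sat w \<tau> (betaS t r k W (q+1))" by simp
      also have "\<dots> = W i ! q" unfolding sat_betaS using U i by auto
      finally show "w ! q = W i ! q" .
    qed
    then show "\<exists>i<k. sat w \<tau> (Sel t r i) \<and> w = W i" using i by blast
  next
    assume "\<exists>i<k. sat w \<tau> (Sel t r i) \<and> w = W i"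
    then obtain i where i: "i < k" "sat w \<tau> (Sel t r i)" "w = W i" by blast
    have tr: "\<forall>p\<in>{1..length w}. w ! (p-1) = sat w \<tau> (betaS t r k W p)"
      unfolding sat_betaS using U i by auto
    show "sat w \<tau> (Conj (Ord t) (Conj (Disjs (map (Sel t r) [0..<k]))
      (Phi (betaS t r k W) K 0 [Cas FTrue Max 1 (length w)])))"
      using o i tr T by auto
  qed
qed

definition tauS :: "nat \<Rightarrow> nat \<Rightarrow> nat \<Rightarrow> nat \<Rightarrow> nat" where
  "tauS t r i x = (if odd x \<and> 3 \<le> x \<and> x < 2*t+1 then (x-1) div 2 + 1
     else if odd x \<and> 2*t+1 \<le> x \<and> x < 2*(t+r)+1 then dg t ((x-1) div 2 - t) i + 1 else 1)"

lemma tauS_outside: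
  assumes "x \<notin> set (selvars t r)" shows "tauS t r i x = 1"
proof -
  have a: "\<not> (odd x \<and> 3 \<le> x \<and> x < 2*t+1)"
  proof
    assume h: "odd x \<and> 3 \<le> x \<and> x < 2*t+1"
    define v where "v = (x - 1) div 2"
    have "x = 2*v+1" "1 \<le> v" "v < t" using h unfolding v_def by presburger+
    then show False using sv2[of v t r] assms by simp
  qed
  have b: "\<not> (odd x \<and> 2*t+1 \<le> x \<and> x < 2*(t+r)+1)"
  proof
    assume h: "odd x \<and> 2*t+1 \<le> x \<and> x < 2*(t+r)+1"
    define j where "j = (x - 1) div 2 - t"
    have "x = 2*(t+j)+1" "j < r" using h unfolding j_def by presburger+
    then show False using sv1[of j r t] assms by simp
  qed
  show ?thesis unfolding tauS_def by (simp only: if_not_P[OF a] if_not_P[OF b])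
qed

lemma tauS_range:
  assumes t: "2 \<le> t" shows "1 \<le> tauS t r i x \<and> tauS t r i x \<le> t"
proof -
  have d: "\<And>j. dg t j i < t" using dg_less t by simp
  have h: "odd x \<and> 3 \<le> x \<and> x < 2*t+1 \<Longrightarrow> (x-1) div 2 + 1 \<le> t" by presburger
  consider (a) "odd x \<and> 3 \<le> x \<and> x < 2*t+1"
    | (b) "\<not> (odd x \<and> 3 \<le> x \<and> x < 2*t+1)" "odd x \<and> 2*t+1 \<le> x \<and> x < 2*(t+r)+1"
    | (c) "\<not> (odd x \<and> 3 \<le> x \<and> x < 2*t+1)" "\<not> (odd x \<and> 2*t+1 \<le> x \<and> x < 2*(t+r)+1)" by blast
  then show ?thesis
  proof cases
    case a
    then have "tauS t r i x = (x-1) div 2 + 1" unfolding tauS_def by simp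
    then show ?thesis using h[OF a] by simp
  next
    case b
    have "tauS t r i x = dg t ((x-1) div 2 - t) i + 1" unfolding tauS_def by (simp only: if_not_P[OF b(1)] if_P[OF b(2)])
    then show ?thesis using d[of "(x-1) div 2 - t"] by simp
  next
    case c
    have "tauS t r i x = 1" unfolding tauS_def by (simp only: if_not_P[OF c(1)] if_not_P[OF c(2)])
    then show ?thesis using t by simp
  qed
qed

lemma tauS_Yt:
  assumes "v < t" shows "teval w (tauS t r i) (Yt v) = v + 1"
proof (cases "v = 0")
  case True then show ?thesis unfolding Yt_def by simp
next
  case False
  have "odd (2*v+1) \<and> 3 \<le> 2*v+1 \<and> 2*v+1 < 2*t+1" using False assms by simp
  moreover have "(2*v+1-1) div 2 = v" by simp
  ultimately show ?thesis unfolding Yt_def tauS_def using False by simp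
qed

lemma tauS_dig:
  assumes "j < r" "2 \<le> t" shows "tauS t r i (2*(t+j)+1) = dg t j i + 1"
proof -
  have "\<not> (odd (2*(t+j)+1) \<and> 3 \<le> 2*(t+j)+1 \<and> 2*(t+j)+1 < 2*t+1)" by simp
  moreover have "odd (2*(t+j)+1) \<and> 2*t+1 \<le> 2*(t+j)+1 \<and> 2*(t+j)+1 < 2*(t+r)+1" using assms by simp
  moreover have "(2*(t+j)+1-1) div 2 - t = j" by simp
  ultimately show ?thesis unfolding tauS_def by presburger
qed

lemma PsiS_sem:
  assumes t: "2 \<le> t" and nt: "t \<le> length w"
  and k: "k \<le> t^r" and K: "length w \<le> 3^K"
  and W: "\<forall>i<k. length (W i) = length w"
  shows "holds w (PsiS t r k K (length w) W) \<longleftrightarrow> (\<exists>i<k. w = W i)"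
proof -
  define n where "n = length w"
  have n1: "1 \<le> n" using t nt n_def by simp
  have hs: "holds w (PsiS t r k K (length w) W) \<longleftrightarrow>
    (\<exists>\<tau>. (\<forall>v. v \<notin> set (selvars t r) \<longrightarrow> \<tau> v = 1) \<and> (\<forall>v\<in>set (selvars t r). \<tau> v \<in> {1..length w}) \<and>
      sat w \<tau> (Conj (Ord t) (Conj (Disjs (map (Sel t r) [0..<k]))
      (Phi (betaS t r k W) K 0 [Cas FTrue Max 1 (length w)]))))"
    unfolding holds_def PsiS_def sat_Exs by simp
  show ?thesis
  proof
    assume "holds w (PsiS t r k K (length w) W)"
    then obtain \<tau> where tau: "\<forall>v. v \<notin> set (selvars t r) \<longrightarrow> \<tau> v = 1" "\<forall>v\<in>set (selvars t r). \<tau> v \<in> {1..length w}"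
      "sat w \<tau> (Conj (Ord t) (Conj (Disjs (map (Sel t r) [0..<k]))
      (Phi (betaS t r k W) K 0 [Cas FTrue Max 1 (length w)])))" using hs by blast
    have rng: "\<forall>x. \<tau> x \<in> {1..length w}" using tau(1,2) n1 n_def by (metis atLeastAtMost_iff order_refl)
    have o: "sat w \<tau> (Ord t)" using tau(3) by simp
    show "\<exists>i<k. w = W i" using body_sem[OF t k K W rng o] tau(3) by blast
  next
    assume "\<exists>i<k. w = W i"
    then obtain i where i: "i < k" "w = W i" by blast
    define \<tau> where "\<tau> = tauS t r i"
    have r1: "\<forall>v. v \<notin> set (selvars t r) \<longrightarrow> \<tau> v = 1" unfolding \<tau>_def using tauS_outside by blast
    have rng: "\<forall>x. \<tau> x \<in> {1..length w}" unfolding \<tau>_def using tauS_range[OF t] nt by (meson atLeastAtMost_iff le_trans)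
    have Y: "\<And>v. v < t \<Longrightarrow> teval w \<tau> (Yt v) = v + 1" unfolding \<tau>_def by (rule tauS_Yt)
    have o: "sat w \<tau> (Ord t)" unfolding sat_Ord using Y by simp
    have s: "sat w \<tau> (Sel t r i)" unfolding sat_Sel
    proof (intro allI impI)
      fix j assume j: "j < r"
      have "dg t j i < t" using dg_less t by simp
      then show "\<tau> (2 * (t + j) + 1) = teval w \<tau> (Yt (dg t j i))"
        using Y tauS_dig[OF j t] unfolding \<tau>_def by simp
    qed
    have "sat w \<tau> (Conj (Ord t) (Conj (Disjs (map (Sel t r) [0..<k]))
      (Phi (betaS t r k W) K 0 [Cas FTrue Max 1 (length w)])))"
      using body_sem[OF t k K W rng o] i s by blast
    then show "holds w (PsiS t r k K (length w) W)" unfolding hs using r1 rng by blast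
  qed
qed

definition betaC :: "bool list \<Rightarrow> nat \<Rightarrow> fform" where
  "betaC u p = (if u ! (p-1) then FTrue else FFalse)"

definition PsiD :: "nat \<Rightarrow> nat \<Rightarrow> (nat \<Rightarrow> bool list) \<Rightarrow> nat \<Rightarrow> fform" where
  "PsiD K n W k = Disjs (map (\<lambda>i. Phi (betaC (W i)) K 0 [Cas FTrue Max 1 n]) [0..<k])"

lemma sat_if: "sat w \<sigma> (if b then FTrue else FFalse) = b"
  by simp

lemma PsiD_sem:
  assumes K: "length w \<le> 3^K" and n1: "1 \<le> length w"
  and W: "\<forall>i<k. length (W i) = length w"
  shows "holds w (PsiD K (length w) W k) \<longleftrightarrow> (\<exists>i<k. w = W i)"
proof -
  have rng: "\<forall>x. (\<lambda>_. 1::nat) x \<in> {1..length w}" using n1 by simp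
  have b: "\<forall>p. free_vars (betaC u p) \<subseteq> {x. odd x}" for u unfolding betaC_def by simp
  have T: "\<And>i. sat w (\<lambda>_. 1) (Phi (betaC (W i)) K 0 [Cas FTrue Max 1 (length w)]) \<longleftrightarrow>
     (\<forall>p\<in>{1..length w}. w ! (p-1) = W i ! (p-1))"
    by (simp only: tree_root[OF b rng K] betaC_def sat_if)
  have E: "\<And>i. i < k \<Longrightarrow> (\<forall>p\<in>{1..length w}. w ! (p-1) = W i ! (p-1)) \<longleftrightarrow> w = W i"
  proof
    fix i assume i: "i < k" and A: "\<forall>p\<in>{1..length w}. w ! (p-1) = W i ! (p-1)"
    show "w = W i"
    proof (rule nth_equalityI)
      show "length w = length (W i)" using W i by simp
      fix q assume "q < length w"
      then have "q + 1 \<in> {1..length w}" by simp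
      then show "w ! q = W i ! q" using A by fastforce
    qed
  qed simp
  show ?thesis unfolding holds_def PsiD_def using T E by auto
qed

lemma qc_PsiD: "qcount (PsiD K n W k) = k * (3 * (K+1))"
proof -
  have "\<And>i. qcount (Phi (betaC (W i)) K 0 [Cas FTrue Max 1 n]) = 3 * (K+1)"
    by (rule qc_Phi) (auto simp: betaC_def)
  then show ?thesis unfolding PsiD_def by (simp add: sum_list_triv o_def)
qed

lemma sentence_PsiD: "sentence (PsiD K n W k)"
proof -
  have "\<And>i. free_vars (Phi (betaC (W i)) K 0 [Cas FTrue Max 1 n]) \<subseteq> {}"
    by (rule qf_Phi_root) (auto simp: betaC_def)
  then show ?thesis unfolding sentence_def PsiD_def by auto
qed


lemma pow_bound: "(n::nat) < b ^ n" if "2 \<le> b"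
proof -
  have "n < 2 ^ n" by simp
  also have "(2::nat) ^ n \<le> b ^ n" using that by (simp add: power_mono)
  finally show ?thesis .
qed

lemma least_pow_props:
  fixes b m :: nat
  assumes b: "2 \<le> b"
  defines "e \<equiv> (LEAST e. m \<le> b ^ e)"
  shows "m \<le> b ^ e" "e \<le> m" "0 < m \<Longrightarrow> real e \<le> log (real b) (real m) + 1"
proof -
  have ex: "m \<le> b ^ m" using pow_bound[OF b, of m] by simp
  show me: "m \<le> b ^ e" unfolding e_def by (rule LeastI[of _ m]) (rule ex)
  show "e \<le> m" unfolding e_def by (rule Least_le) (rule ex)
  assume m0: "0 < m"
  show "real e \<le> log (real b) (real m) + 1"
  proof (cases "e = 0")
    case True
    have "0 \<le> log (real b) (real m)" using b m0 by simp
    then show ?thesis using True by simp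
  next
    case False
    then have "e - 1 < e" by simp
    then have "\<not> m \<le> b ^ (e - 1)" unfolding e_def by (rule not_less_Least)
    then have "real b ^ (e - 1) < real m" by (metis not_le of_nat_less_iff of_nat_power)
    then have "real (e - 1) < log (real b) (real m)" using b by (intro less_log_of_power) auto
    then show ?thesis using False by simp
  qed
qed

theorem mainTheorem17:
  fixes t :: nat and f :: "nat \<Rightarrow> nat"
  assumes "t \<ge> 2"
    and "filterlim f at_top at_top"
  shows "\<exists>C::real. \<forall>n::nat. n \<ge> 1 \<longrightarrow>
           (\<forall>A :: bool list set. A \<subseteq> {w. length w = n} \<and> card A = f n \<longrightarrow>
              (\<exists>\<phi>. sentence \<phi> \<and>
                   real (qcount \<phi>) \<le> 3 * log 3 (real n) + log (real t) (real (f n)) + C \<and>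
                   (\<forall>w. length w = n \<longrightarrow> (holds w \<phi> \<longleftrightarrow> w \<in> A))))"
proof -
  have t: "2 \<le> t" using assms(1) by simp
  define C :: real where "C = real (2^t * (3*(t+1))) + real t + 6"
  show ?thesis
  proof (intro exI[of _ C] allI impI)
    fix n :: nat and A :: "bool list set"
    assume n1: "n \<ge> 1" and A: "A \<subseteq> {w. length w = n} \<and> card A = f n"
    define k where "k = card A"
    have Lfin: "finite {w::bool list. length w = n}"
      using finite_lists_length_eq[of "UNIV :: bool set" n] by simp
    have Lcard: "card {w::bool list. length w = n} = 2 ^ n"
      using card_lists_length_eq[of "UNIV :: bool set" n] by (simp add: card_UNIV_bool)
    have finA: "finite A" using A Lfin finite_subset by blast
    have kb: "k \<le> 2 ^ n" unfolding k_def using card_mono[OF Lfin] A Lcard by metis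
    obtain W where bij: "bij_betw W {0..<k} A" using ex_bij_betw_nat_finite[OF finA] k_def by blast
    have Wl: "\<forall>i<k. length (W i) = n"
    proof (intro allI impI)
      fix i assume "i < k"
      then have "W i \<in> A" using bij_betwE[OF bij] by simp
      then show "length (W i) = n" using A by blast
    qed
    have memA: "\<And>w. w \<in> A \<longleftrightarrow> (\<exists>i<k. w = W i)" using bij unfolding bij_betw_def by auto
    define K where "K = (LEAST e. n \<le> 3 ^ e)"
    have K1: "n \<le> 3 ^ K" and K2: "K \<le> n" and K3: "real K \<le> log 3 (real n) + 1"
      using least_pow_props[of 3 n] n1 unfolding K_def by auto
    have logn: "0 \<le> log 3 (real n)" using n1 by simp
    have logk: "0 \<le> log (real t) (real k)"
    proof (cases "k = 0")
      case True then show ?thesis by (simp add: log_def)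
    next
      case False then show ?thesis using t by simp
    qed
    have fk: "real (f n) = real k" using A k_def by simp
    show "\<exists>\<phi>. sentence \<phi> \<and>
                   real (qcount \<phi>) \<le> 3 * log 3 (real n) + log (real t) (real (f n)) + C \<and>
                   (\<forall>w. length w = n \<longrightarrow> (holds w \<phi> \<longleftrightarrow> w \<in> A))"
    proof (cases "t \<le> n")
      case True
      define r where "r = (LEAST e. k \<le> t ^ e)"
      have r1: "k \<le> t ^ r" and r3: "0 < k \<Longrightarrow> real r \<le> log (real t) (real k) + 1"
        using least_pow_props[OF t, of k] unfolding r_def by auto
      have r4: "real r \<le> log (real t) (real k) + 1"
      proof (cases "k = 0")
        case True
        then have "r = 0" unfolding r_def by (simp add: Least_eq_0)
        then show ?thesis using logk by simp
      next
        case False then show ?thesis using r3 by simp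
      qed
      let ?\<phi> = "PsiS t r k K n W"
      have q: "qcount ?\<phi> = (t - 1) + r + 3 * (K+1)" by (rule qc_PsiS)
      have "real (qcount ?\<phi>) = real t - 1 + real r + 3 * (real K + 1)" using q t by simp
      also have "\<dots> \<le> real t - 1 + (log (real t) (real k) + 1) + 3 * (log 3 (real n) + 1 + 1)"
      proof -
        have "3 * (real K + 1) \<le> 3 * (log 3 (real n) + 1 + 1)" using K3 by simp
        then show ?thesis using r4 by simp
      qed
      also have "\<dots> \<le> 3 * log 3 (real n) + log (real t) (real (f n)) + C"
        unfolding C_def fk by simp
      finally have qb: "real (qcount ?\<phi>) \<le> 3 * log 3 (real n) + log (real t) (real (f n)) + C" .
      have sem: "\<forall>w. length w = n \<longrightarrow> (holds w ?\<phi> \<longleftrightarrow> w \<in> A)"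
      proof (intro allI impI)
        fix w :: "bool list" assume lw: "length w = n"
        have "holds w (PsiS t r k K (length w) W) \<longleftrightarrow> (\<exists>i<k. w = W i)"
          by (rule PsiS_sem[OF t]) (use True lw r1 K1 Wl in auto)
        then show "holds w ?\<phi> \<longleftrightarrow> w \<in> A" using memA lw by simp
      qed
      show ?thesis using sentence_PsiS[of t r k K n W] t qb sem by auto
    next
      case False
      let ?\<phi> = "PsiD K n W k"
      have q: "qcount ?\<phi> = k * (3 * (K+1))" by (rule qc_PsiD)
      have "k \<le> 2 ^ t" using kb False by (meson le_trans less_imp_le_nat not_le one_le_numeral power_increasing)
      moreover have "3 * (K+1) \<le> 3 * (t+1)" using K2 False by simp
      ultimately have "qcount ?\<phi> \<le> 2^t * (3*(t+1))" unfolding q by (rule mult_mono) auto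
      then have "real (qcount ?\<phi>) \<le> real (2^t * (3*(t+1)))" by (simp only: of_nat_le_iff)
      also have "\<dots> \<le> 3 * log 3 (real n) + log (real t) (real (f n)) + C"
        unfolding C_def fk using logn logk by simp
      finally have qb: "real (qcount ?\<phi>) \<le> 3 * log 3 (real n) + log (real t) (real (f n)) + C" .
      have sem: "\<forall>w. length w = n \<longrightarrow> (holds w ?\<phi> \<longleftrightarrow> w \<in> A)"
      proof (intro allI impI)
        fix w :: "bool list" assume lw: "length w = n"
        have "holds w (PsiD K (length w) W k) \<longleftrightarrow> (\<exists>i<k. w = W i)"
          by (rule PsiD_sem) (use lw n1 K1 Wl in auto)
        then show "holds w ?\<phi> \<longleftrightarrow> w \<in> A" using memA lw by simp
      qed
      show ?thesis using sentence_PsiD[of K n W k] qb sem by auto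
    qed
  qed
qed


end
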